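(* Suppose $\|\widehat\theta_t-\theta^*\|_{\Sigma_t}\le\beta_t$ for all $t\in[T]$ (with $\|\theta^*\|_2\le L_\theta$). Then for each episode $k$ of \texttt{UCMNLK} and each $t$ with $t_k\le t<t_{k+1}-1$, $Q_k(s_t,a_t)\le r(s_t,a_t)+\gamma\max_{p\in\mathcal P_{t_k}}\big\{\sum_{s'\in\mathcal S_{s_t,a_t}}p_{s_t,a_t,s'}V_k(s')\big\}+\gamma^N$, where $V_k(s)=\max_{a}Q_k(s,a)$.
   Context: Setting: finite $\mathcal S,\mathcal A$, reward $r\in[0,1]$, MNL transitions $p(s'\mid s,a,\theta^* )$ with $p(s'\mid s,a,\theta)=\exp(\varphi(s,a,s')^\top\theta)/\sum_{s''\in\mathcal S_{s,a}}\exp(\varphi(s,a,s'')^\top\theta)$ on known reachable sets $\mathcal S_{s,a}$, features $\varphi\in\mathbb R^d$. \texttt{UCMNLK} with discount $\gamma\in[0,1)$ and $N$ rounds: $\widehat\theta_t,\Sigma_t$ are the online estimates (online Newton-type update of the multinomial log-loss, $\Sigma_1=\lambda I_d$, $\Sigma_{t+1}=\Sigma_t+\nabla^2\ell_t(\widehat\theta_{t+1})$); $\mathcal P_t$ is the set of $p\in[0,1]^{\mathcal S\times\mathcal A\times\mathcal S}$ with $\sum_{s'\in\mathcal S_{s,a}}p_{s,a,s'}=1$ and $\sum_{s'\in\mathcal S_{s,a}}|p_{s,a,s'}-p(s'\mid s,a,\widehat\theta_t)|\le B^{1,t}_{s,a}+B^{2,t}_{s,a}$ for all $(s,a)$, where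 $B^{1,t}_{s,a}=\beta_t\sum_{s'}p(s'\mid s,a,\widehat\theta_t)\|\varphi(s,a,s')-\sum_{s''}p(s''\mid s,a,\widehat\theta_t)\varphi(s,a,s'')\|_{\Sigma_t^{-1}}$ and $B^{2,t}_{s,a}=3\beta_t^2\max_{s'}\|\varphi(s,a,s')\|^2_{\Sigma_t^{-1}}$, $\beta_t>0$ the confidence radius. Episode $k$ starts at $t_k$; $Q_k=\texttt{DEVI}(\gamma,\mathcal P_{t_k},N)$ where \texttt{DEVI} sets $Q^{(0)}\equiv1/(1-\gamma)$, $V^{(n-1)}(s)=\max_aQ^{(n-1)}(s,a)$, $Q^{(n)}(s,a)=r(s,a)+\gamma\max_{p\in\mathcal P}\sum_{s'\in\mathcal S_{s,a}}p_{s,a,s'}V^{(n-1)}(s')$ and returns $Q^{(N)}$; actions $a_t=\pi_k(s_t)\in\arg\max_aQ_k(s_t,a)$; the episode ends (new episode starts at $t_{k+1}$) once $\det\Sigma_t>2\det\Sigma_{t_k}$. *)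

theory Defs
  imports "HOL-Analysis.Analysis"
begin

definition mnl_prob ::
  "('s \<Rightarrow> 'a \<Rightarrow> 's \<Rightarrow> real^'d) \<Rightarrow> ('s \<Rightarrow> 'a \<Rightarrow> 's set) \<Rightarrow> real^'d \<Rightarrow> 's \<Rightarrow> 'a \<Rightarrow> 's \<Rightarrow> real" where
  "mnl_prob \<phi> Sset \<theta> s a s' =
     exp (\<phi> s a s' \<bullet> \<theta>) / (\<Sum>s''\<in>Sset s a. exp (\<phi> s a s'' \<bullet> \<theta>))"

definition wnorm :: "real^'d^'d \<Rightarrow> real^'d \<Rightarrow> real" where
  "wnorm M x = sqrt (x \<bullet> (M *v x))"

definition outer :: "real^'d \<Rightarrow> real^'d \<Rightarrow> real^'d^'d" where
  "outer x y = (\<chi> i j. x $ i * y $ j)"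

definition mean_feat ::
  "('s \<Rightarrow> 'a \<Rightarrow> 's \<Rightarrow> real^'d) \<Rightarrow> ('s \<Rightarrow> 'a \<Rightarrow> 's set) \<Rightarrow> real^'d \<Rightarrow> 's \<Rightarrow> 'a \<Rightarrow> real^'d" where
  "mean_feat \<phi> Sset \<theta> s a = (\<Sum>s''\<in>Sset s a. mnl_prob \<phi> Sset \<theta> s a s'' *\<^sub>R \<phi> s a s'')"

text \<open>Hessian of the multinomial log-loss at (s,a) (independent of the observed next state).\<close>
definition mnl_hessian ::
  "('s \<Rightarrow> 'a \<Rightarrow> 's \<Rightarrow> real^'d) \<Rightarrow> ('s \<Rightarrow> 'a \<Rightarrow> 's set) \<Rightarrow> real^'d \<Rightarrow> 's \<Rightarrow> 'a \<Rightarrow> real^'d^'d" where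
  "mnl_hessian \<phi> Sset \<theta> s a =
     (\<Sum>s'\<in>Sset s a. mnl_prob \<phi> Sset \<theta> s a s' *\<^sub>R outer (\<phi> s a s') (\<phi> s a s'))
     - outer (mean_feat \<phi> Sset \<theta> s a) (mean_feat \<phi> Sset \<theta> s a)"

definition bonus1 ::
  "('s \<Rightarrow> 'a \<Rightarrow> 's \<Rightarrow> real^'d) \<Rightarrow> ('s \<Rightarrow> 'a \<Rightarrow> 's set) \<Rightarrow> real^'d \<Rightarrow> real^'d^'d \<Rightarrow> real \<Rightarrow> 's \<Rightarrow> 'a \<Rightarrow> real" where
  "bonus1 \<phi> Sset \<theta> \<Sigma> \<beta> s a =
     \<beta> * (\<Sum>s'\<in>Sset s a. mnl_prob \<phi> Sset \<theta> s a s' *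
            wnorm (matrix_inv \<Sigma>) (\<phi> s a s' - mean_feat \<phi> Sset \<theta> s a))"

definition bonus2 ::
  "('s \<Rightarrow> 'a \<Rightarrow> 's \<Rightarrow> real^'d) \<Rightarrow> ('s \<Rightarrow> 'a \<Rightarrow> 's set) \<Rightarrow> real^'d^'d \<Rightarrow> real \<Rightarrow> 's \<Rightarrow> 'a \<Rightarrow> real" where
  "bonus2 \<phi> Sset \<Sigma> \<beta> s a =
     3 * \<beta>\<^sup>2 * Max ((\<lambda>s'. (wnorm (matrix_inv \<Sigma>) (\<phi> s a s'))\<^sup>2) ` Sset s a)"

definition conf_set ::
  "('s \<Rightarrow> 'a \<Rightarrow> 's \<Rightarrow> real^'d) \<Rightarrow> ('s \<Rightarrow> 'a \<Rightarrow> 's set) \<Rightarrow> real^'d \<Rightarrow> real^'d^'d \<Rightarrow> real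
     \<Rightarrow> ('s \<Rightarrow> 'a \<Rightarrow> 's \<Rightarrow> real) set" where
  "conf_set \<phi> Sset \<theta> \<Sigma> \<beta> =
     {p. (\<forall>s a s'. 0 \<le> p s a s' \<and> p s a s' \<le> 1)
       \<and> (\<forall>s a. (\<Sum>s'\<in>Sset s a. p s a s') = 1)
       \<and> (\<forall>s a. (\<Sum>s'\<in>Sset s a. \<bar>p s a s' - mnl_prob \<phi> Sset \<theta> s a s'\<bar>)
                 \<le> bonus1 \<phi> Sset \<theta> \<Sigma> \<beta> s a + bonus2 \<phi> Sset \<Sigma> \<beta> s a)}"

definition Vof :: "('s \<Rightarrow> 'a::finite \<Rightarrow> real) \<Rightarrow> 's \<Rightarrow> real" where
  "Vof Q s = Max (range (Q s))"

definition opt_backup ::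
  "('s \<Rightarrow> 'a \<Rightarrow> 's \<Rightarrow> real) set \<Rightarrow> ('s \<Rightarrow> 'a \<Rightarrow> 's set) \<Rightarrow> ('s \<Rightarrow> real) \<Rightarrow> 's \<Rightarrow> 'a \<Rightarrow> real" where
  "opt_backup P Sset V s a = (SUP p\<in>P. \<Sum>s'\<in>Sset s a. p s a s' * V s')"

text \<open>DEVI: the iterates Q^{(n)}; DEVI(gamma,P,N) returns devi_Q gamma P Sset r N.\<close>
primrec devi_Q ::
  "real \<Rightarrow> ('s \<Rightarrow> 'a::finite \<Rightarrow> 's \<Rightarrow> real) set \<Rightarrow> ('s \<Rightarrow> 'a \<Rightarrow> 's set) \<Rightarrow> ('s \<Rightarrow> 'a \<Rightarrow> real)
     \<Rightarrow> nat \<Rightarrow> 's \<Rightarrow> 'a \<Rightarrow> real" where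
  "devi_Q \<gamma> P Sset r 0 = (\<lambda>s a. 1 / (1 - \<gamma>))"
| "devi_Q \<gamma> P Sset r (Suc n) =
     (\<lambda>s a. r s a + \<gamma> * opt_backup P Sset (Vof (devi_Q \<gamma> P Sset r n)) s a)"

end

theory Submission
  imports Defs
begin


lemma Vof_le:
  fixes Q Q' :: "'s \<Rightarrow> 'a::finite \<Rightarrow> real"
  assumes "\<And>a. Q s a \<le> Q' s a + c"
  shows "Vof Q s \<le> Vof Q' s + c"
proof -
  have "Max (range (Q s)) \<in> range (Q s)" by (intro Max_in) auto
  then obtain a where a: "Max (range (Q s)) = Q s a" by (auto simp: image_iff)
  have "Q' s a \<le> Max (range (Q' s))" by (intro Max_ge) auto
  then show ?thesis using assms[of a] a unfolding Vof_def by linarith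
qed

lemma backup_le:
  assumes ne: "P \<noteq> {}"
    and rng: "\<And>p s a s'. p \<in> P \<Longrightarrow> 0 \<le> p s a s' \<and> p s a s' \<le> 1"
    and sm: "\<And>p s a. p \<in> P \<Longrightarrow> (\<Sum>s'\<in>Sset s a. p s a s') = 1"
    and fin: "finite (Sset s a)"
    and d: "\<And>s'. V s' \<le> W s' + c"
  shows "opt_backup P Sset V s a \<le> opt_backup P Sset W s a + c"
proof -
  have bdd: "bdd_above ((\<lambda>p. \<Sum>s'\<in>Sset s a. p s a s' * W s') ` P)"
  proof (rule bdd_aboveI2)
    fix p assume "p \<in> P"
    show "(\<Sum>s'\<in>Sset s a. p s a s' * W s') \<le> (\<Sum>s'\<in>Sset s a. \<bar>W s'\<bar>)"
    proof (rule sum_mono)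
      fix s' have "0 \<le> p s a s'" "p s a s' \<le> 1" using rng[OF \<open>p \<in> P\<close>] by auto
      then have "p s a s' * W s' \<le> p s a s' * \<bar>W s'\<bar>" by (intro mult_left_mono) auto
      also have "\<dots> \<le> 1 * \<bar>W s'\<bar>" using \<open>p s a s' \<le> 1\<close> by (intro mult_right_mono) auto
      finally show "p s a s' * W s' \<le> \<bar>W s'\<bar>" by simp
    qed
  qed
  show ?thesis unfolding opt_backup_def
  proof (rule cSUP_least[OF ne])
    fix p assume p: "p \<in> P"
    have "(\<Sum>s'\<in>Sset s a. p s a s' * V s') \<le> (\<Sum>s'\<in>Sset s a. p s a s' * W s' + p s a s' * c)"
    proof (rule sum_mono)
      fix s' have "0 \<le> p s a s'" using rng[OF p] by auto
      then show "p s a s' * V s' \<le> p s a s' * W s' + p s a s' * c"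
        using mult_left_mono[OF d[of s'] \<open>0 \<le> p s a s'\<close>] by (simp add: algebra_simps)
    qed
    also have "\<dots> = (\<Sum>s'\<in>Sset s a. p s a s' * W s') + c"
      by (simp add: sum.distrib sum_distrib_right[symmetric] sm[OF p])
    also have "\<dots> \<le> (SUP p\<in>P. \<Sum>s'\<in>Sset s a. p s a s' * W s') + c"
      using cSUP_upper[OF p bdd] by simp
    finally show "(\<Sum>s'\<in>Sset s a. p s a s' * V s') \<le> (SUP p\<in>P. \<Sum>s'\<in>Sset s a. p s a s' * W s') + c" .
  qed
qed

lemma backup_const:
  assumes ne: "P \<noteq> {}"
    and sm: "\<And>p s a. p \<in> P \<Longrightarrow> (\<Sum>s'\<in>Sset s a. p s a s') = 1"
  shows "opt_backup P Sset (\<lambda>_. c) s a = c"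
proof -
  have "\<And>p. p \<in> P \<Longrightarrow> (\<Sum>s'\<in>Sset s a. p s a s' * c) = c"
    by (simp add: sum_distrib_right[symmetric] sm)
  then have "(\<lambda>p. \<Sum>s'\<in>Sset s a. p s a s' * c) ` P = {c}" using ne by auto
  then show ?thesis unfolding opt_backup_def by simp
qed

lemma devi_contract:
  fixes Sset :: "'s::finite \<Rightarrow> 'a::finite \<Rightarrow> 's set"
  assumes ne: "P \<noteq> {}"
    and rng: "\<And>p s a s'. p \<in> P \<Longrightarrow> 0 \<le> p s a s' \<and> p s a s' \<le> 1"
    and sm: "\<And>p s a. p \<in> P \<Longrightarrow> (\<Sum>s'\<in>Sset s a. p s a s') = 1"
    and r_range: "\<And>s a. 0 \<le> r s a \<and> r s a \<le> 1"
    and gamma: "0 \<le> \<gamma>" "\<gamma> < 1"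
  shows "\<bar>devi_Q \<gamma> P Sset r (Suc n) s a - devi_Q \<gamma> P Sset r n s a\<bar> \<le> \<gamma> ^ n"
proof (induction n arbitrary: s a)
  case 0
  have V0: "Vof (\<lambda>(s::'s) (a::'a). 1 / (1 - \<gamma>)) = (\<lambda>_. 1 / (1 - \<gamma>))"
    by (rule ext) (simp add: Vof_def)
  have bc: "opt_backup P Sset (\<lambda>_. 1 / (1 - \<gamma>)) s a = 1 / (1 - \<gamma>)"
    by (rule backup_const; (rule ne | erule sm))
  have "devi_Q \<gamma> P Sset r (Suc 0) s a = r s a + \<gamma> * (1 / (1 - \<gamma>))"
    using bc by (simp add: V0)
  moreover have "\<gamma> * (1 / (1 - \<gamma>)) - 1 / (1 - \<gamma>) = -1"
  proof -
    have c1: "(1 / (1 - \<gamma>)) * (1 - \<gamma>) = 1" using gamma by simp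
    have "\<gamma> * (1 / (1 - \<gamma>)) - 1 / (1 - \<gamma>) = - ((1 / (1 - \<gamma>)) * (1 - \<gamma>))"
      by (simp only: right_diff_distrib mult_1_right mult.commute[of \<gamma>])
    then show ?thesis using c1 by simp
  qed
  ultimately show ?case using r_range[of s a] by simp
next
  case (Suc n)
  let ?Q = "devi_Q \<gamma> P Sset r"
  have fin: "\<And>s a. finite (Sset s a)" by simp
  have d1: "\<And>s'. Vof (?Q (Suc n)) s' \<le> Vof (?Q n) s' + \<gamma>^n"
  proof (rule Vof_le)
    fix s' b show "?Q (Suc n) s' b \<le> ?Q n s' b + \<gamma>^n" using Suc.IH[of s' b] by linarith
  qed
  have d2: "\<And>s'. Vof (?Q n) s' \<le> Vof (?Q (Suc n)) s' + \<gamma>^n"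
  proof (rule Vof_le)
    fix s' b show "?Q n s' b \<le> ?Q (Suc n) s' b + \<gamma>^n" using Suc.IH[of s' b] by linarith
  qed
  have b1: "opt_backup P Sset (Vof (?Q (Suc n))) s a \<le> opt_backup P Sset (Vof (?Q n)) s a + \<gamma>^n"
    by (rule backup_le; (rule ne | erule rng | erule sm | rule fin | rule d1))
  have b2: "opt_backup P Sset (Vof (?Q n)) s a \<le> opt_backup P Sset (Vof (?Q (Suc n))) s a + \<gamma>^n"
    by (rule backup_le; (rule ne | erule rng | erule sm | rule fin | rule d2))
  have "\<bar>opt_backup P Sset (Vof (?Q (Suc n))) s a - opt_backup P Sset (Vof (?Q n)) s a\<bar> \<le> \<gamma>^n"
    using b1 b2 by linarith
  then have "\<gamma> * \<bar>opt_backup P Sset (Vof (?Q (Suc n))) s a - opt_backup P Sset (Vof (?Q n)) s a\<bar> \<le> \<gamma> * \<gamma>^n"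
    using gamma by (intro mult_left_mono) auto
  then show ?case using gamma
    by (simp add: abs_mult right_diff_distrib[symmetric])
qed

lemma outer_mult: "outer u v *v x = (v \<bullet> x) *\<^sub>R u"
  by (simp add: vec_eq_iff outer_def matrix_vector_mult_def inner_vec_def sum_distrib_left mult_ac)

lemma sum_matrix_vector: "(\<Sum>s\<in>S. M s) *v x = (\<Sum>s\<in>S. M s *v x)"
  by (induction S rule: infinite_finite_induct) (auto simp: matrix_vector_mult_add_rdistrib)

lemma variance_nonneg:
  fixes p a :: "'s \<Rightarrow> real"
  assumes "\<And>s. s \<in> S \<Longrightarrow> 0 \<le> p s" "sum p S = 1"
  shows "(\<Sum>s\<in>S. p s) * 0 \<le> (\<Sum>s\<in>S. p s * (a s)\<^sup>2) - (\<Sum>s\<in>S. p s * a s)\<^sup>2"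
proof -
  define \<mu> where "\<mu> = (\<Sum>s\<in>S. p s * a s)"
  have "0 \<le> (\<Sum>s\<in>S. p s * (a s - \<mu>)\<^sup>2)" using assms by (intro sum_nonneg) auto
  also have "(\<Sum>s\<in>S. p s * (a s - \<mu>)\<^sup>2) = (\<Sum>s\<in>S. p s * (a s)\<^sup>2 - 2 * \<mu> * (p s * a s) + \<mu>\<^sup>2 * p s)"
    by (rule sum.cong) (auto simp: power2_eq_square algebra_simps)
  also have "\<dots> = (\<Sum>s\<in>S. p s * (a s)\<^sup>2) - 2 * \<mu> * \<mu> + \<mu>\<^sup>2 * 1"
    by (simp add: sum.distrib sum_subtractf sum_distrib_left[symmetric] assms(2) \<mu>_def)
  finally show ?thesis by (simp add: \<mu>_def power2_eq_square)
qed

lemma hess_psd: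
  fixes f :: "'s \<Rightarrow> real^'d"
  assumes "\<And>s. s \<in> S \<Longrightarrow> 0 \<le> p s" "sum p S = 1"
  shows "0 \<le> x \<bullet> (((\<Sum>s\<in>S. p s *\<^sub>R outer (f s) (f s)) - outer (\<Sum>s\<in>S. p s *\<^sub>R f s) (\<Sum>s\<in>S. p s *\<^sub>R f s)) *v x)"
proof -
  have e1: "x \<bullet> ((\<Sum>s\<in>S. p s *\<^sub>R outer (f s) (f s)) *v x) = (\<Sum>s\<in>S. p s * (f s \<bullet> x)\<^sup>2)"
    by (simp add: sum_matrix_vector scaleR_matrix_vector_assoc[symmetric] outer_mult inner_sum_right
        power2_eq_square inner_commute mult_ac)
  have e2: "x \<bullet> (outer (\<Sum>s\<in>S. p s *\<^sub>R f s) (\<Sum>s\<in>S. p s *\<^sub>R f s) *v x) = (\<Sum>s\<in>S. p s * (f s \<bullet> x))\<^sup>2"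
    by (simp add: outer_mult inner_sum_left inner_sum_right power2_eq_square inner_commute)
  show ?thesis using variance_nonneg[OF assms, of "\<lambda>s. f s \<bullet> x"]
    by (simp add: matrix_vector_mult_diff_rdistrib inner_diff_right e1 e2)
qed

lemma psd_inv:
  fixes M :: "real^'d^'d"
  assumes "\<And>x. x \<noteq> 0 \<Longrightarrow> 0 < x \<bullet> (M *v x)"
  shows "0 \<le> x \<bullet> (matrix_inv M *v x)"
proof -
  have "\<forall>y. M *v y = 0 \<longrightarrow> y = 0" using assms by force
  then obtain B where "B ** M = mat 1" using matrix_left_invertible_ker by blast
  then have "invertible M" using invertible_left_inverse by blast
  then have "\<exists>A'. M ** A' = mat 1 \<and> A' ** M = mat 1" unfolding invertible_def .
  then have "M ** matrix_inv M = mat 1" unfolding matrix_inv_def by (rule someI2_ex) auto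
  define y where "y = matrix_inv M *v x"
  have xy: "x = M *v y" unfolding y_def matrix_vector_mul_assoc \<open>M ** matrix_inv M = mat 1\<close> by simp
  show ?thesis
  proof (cases "y = 0")
    case True then show ?thesis using xy by simp
  next
    case False
    have "x \<bullet> (matrix_inv M *v x) = y \<bullet> (M *v y)" using xy y_def by (simp add: inner_commute)
    then show ?thesis using assms[OF False] by simp
  qed
qed

lemma mnl_facts:
  assumes "finite (Sset s a)" "Sset s a \<noteq> {}"
  shows "\<And>s'. 0 \<le> mnl_prob \<phi> Sset \<theta> s a s'"
    and "(\<Sum>s'\<in>Sset s a. mnl_prob \<phi> Sset \<theta> s a s') = 1"
proof -
  have pos: "0 < (\<Sum>s''\<in>Sset s a. exp (\<phi> s a s'' \<bullet> \<theta>))"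
    using assms by (intro sum_pos) auto
  show "\<And>s'. 0 \<le> mnl_prob \<phi> Sset \<theta> s a s'" unfolding mnl_prob_def using pos by simp
  show "(\<Sum>s'\<in>Sset s a. mnl_prob \<phi> Sset \<theta> s a s') = 1"
    unfolding mnl_prob_def using pos by (simp add: sum_divide_distrib[symmetric])
qed

theorem lemma5:
  fixes \<phi> :: "'s::finite \<Rightarrow> 'a::finite \<Rightarrow> 's \<Rightarrow> real^'d"
    and Sset :: "'s \<Rightarrow> 'a \<Rightarrow> 's set"
    and r :: "'s \<Rightarrow> 'a \<Rightarrow> real"
    and \<gamma> lam L\<theta> :: real
    and N T :: nat
    and \<theta>star :: "real^'d"
    and \<theta>hat :: "nat \<Rightarrow> real^'d"
    and \<Sigma> :: "nat \<Rightarrow> real^'d^'d"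
    and \<beta> :: "nat \<Rightarrow> real"
    and tk :: "nat \<Rightarrow> nat"
    and sta :: "nat \<Rightarrow> 's"
    and act :: "nat \<Rightarrow> 'a"
    and k t :: nat
  assumes Sset_ne: "\<And>s a. Sset s a \<noteq> {}"
    and r_range: "\<And>s a. 0 \<le> r s a \<and> r s a \<le> 1"
    and gamma: "0 \<le> \<gamma>" "\<gamma> < 1"
    and lambda: "lam > 0"
    and beta_pos: "\<And>t. \<beta> t > 0"
    and theta_bound: "norm \<theta>star \<le> L\<theta>"
    and Sigma_init: "\<Sigma> 1 = lam *\<^sub>R mat 1"
    and Sigma_upd: "\<And>t. t \<ge> 1 \<Longrightarrow>
          \<Sigma> (Suc t) = \<Sigma> t + mnl_hessian \<phi> Sset (\<theta>hat (Suc t)) (sta t) (act t)"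
    and transitions: "\<And>t. t \<ge> 1 \<Longrightarrow> sta (Suc t) \<in> Sset (sta t) (act t)"
    and ep_start: "tk 0 = 1"
    and ep_mono: "\<And>j. tk j < tk (Suc j)"
    and ep_within: "\<And>j u. tk j < u \<Longrightarrow> u < tk (Suc j) \<Longrightarrow> det (\<Sigma> u) \<le> 2 * det (\<Sigma> (tk j))"
    and ep_switch: "\<And>j. tk (Suc j) \<le> T \<Longrightarrow> det (\<Sigma> (tk (Suc j))) > 2 * det (\<Sigma> (tk j))"
    and greedy: "\<And>j u b. tk j \<le> u \<Longrightarrow> u < tk (Suc j) \<Longrightarrow>
          devi_Q \<gamma> (conf_set \<phi> Sset (\<theta>hat (tk j)) (\<Sigma> (tk j)) (\<beta> (tk j))) Sset r N (sta u) b
          \<le> devi_Q \<gamma> (conf_set \<phi> Sset (\<theta>hat (tk j)) (\<Sigma> (tk j)) (\<beta> (tk j))) Sset r N (sta u) (act u)"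
    and confidence: "\<And>u. 1 \<le> u \<Longrightarrow> u \<le> T \<Longrightarrow> wnorm (\<Sigma> u) (\<theta>hat u - \<theta>star) \<le> \<beta> u"
    and t_range: "tk k \<le> t" "t < tk (Suc k) - 1"
  shows "devi_Q \<gamma> (conf_set \<phi> Sset (\<theta>hat (tk k)) (\<Sigma> (tk k)) (\<beta> (tk k))) Sset r N (sta t) (act t)
     \<le> r (sta t) (act t)
        + \<gamma> * opt_backup (conf_set \<phi> Sset (\<theta>hat (tk k)) (\<Sigma> (tk k)) (\<beta> (tk k))) Sset
              (Vof (devi_Q \<gamma> (conf_set \<phi> Sset (\<theta>hat (tk k)) (\<Sigma> (tk k)) (\<beta> (tk k))) Sset r N))
              (sta t) (act t)
        + \<gamma> ^ N"
proof -
  let ?P = "conf_set \<phi> Sset (\<theta>hat (tk k)) (\<Sigma> (tk k)) (\<beta> (tk k))"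
  define p0 where "p0 = (\<lambda>s a s'. if s' \<in> Sset s a then mnl_prob \<phi> Sset (\<theta>hat (tk k)) s a s' else 0)"
  have pos: "\<And>s a s'. 0 < (\<Sum>s''\<in>Sset s a. exp (\<phi> s a s'' \<bullet> \<theta>hat (tk k)))"
    using Sset_ne by (intro sum_pos) auto
  have rng0: "\<And>s a s'. 0 \<le> p0 s a s' \<and> p0 s a s' \<le> 1"
  proof -
    fix s a s'
    show "0 \<le> p0 s a s' \<and> p0 s a s' \<le> 1"
    proof (cases "s' \<in> Sset s a")
      case True
      have "exp (\<phi> s a s' \<bullet> \<theta>hat (tk k)) \<le> (\<Sum>s''\<in>Sset s a. exp (\<phi> s a s'' \<bullet> \<theta>hat (tk k)))"
        using True by (intro member_le_sum) auto
      then show ?thesis using True pos[of s a] unfolding p0_def mnl_prob_def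
        by (simp add: divide_le_eq_1)
    qed (simp add: p0_def)
  qed
  have sm0: "\<And>s a. (\<Sum>s'\<in>Sset s a. p0 s a s') = 1"
  proof -
    fix s a
    have "(\<Sum>s'\<in>Sset s a. p0 s a s') = (\<Sum>s'\<in>Sset s a. exp (\<phi> s a s' \<bullet> \<theta>hat (tk k)) / (\<Sum>s''\<in>Sset s a. exp (\<phi> s a s'' \<bullet> \<theta>hat (tk k))))"
      by (rule sum.cong) (auto simp: p0_def mnl_prob_def)
    also have "\<dots> = 1" using pos[of s a] by (simp add: sum_divide_distrib[symmetric])
    finally show "(\<Sum>s'\<in>Sset s a. p0 s a s') = 1" .
  qed
  have tk1: "\<And>j. 1 \<le> tk j"
  proof -
    fix j show "1 \<le> tk j"
      by (induction j) (use ep_start ep_mono in \<open>auto intro: order.strict_implies_order order_trans\<close>)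
  qed
  have pd: "lam * (x \<bullet> x) \<le> x \<bullet> (\<Sigma> u *v x)" if "1 \<le> u" for u x
    using that
  proof (induction u rule: dec_induct)
    case base
    show ?case unfolding Sigma_init scaleR_matrix_vector_assoc[symmetric] by simp
  next
    case (step u)
    have "0 \<le> x \<bullet> (mnl_hessian \<phi> Sset (\<theta>hat (Suc u)) (sta u) (act u) *v x)"
      unfolding mnl_hessian_def mean_feat_def
      by (rule hess_psd) (use mnl_facts[of Sset "sta u" "act u", OF _ Sset_ne] in auto)
    then show ?case using step.IH Sigma_upd[OF step.hyps(1)]
      by (simp add: matrix_vector_mult_add_rdistrib inner_add_right)
  qed
  have inv_psd: "\<And>x. 0 \<le> x \<bullet> (matrix_inv (\<Sigma> (tk k)) *v x)"
  proof (rule psd_inv)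
    fix x :: "real^'d" assume "x \<noteq> 0"
    then have "0 < lam * (x \<bullet> x)" using lambda by simp
    then show "0 < x \<bullet> (\<Sigma> (tk k) *v x)" using pd[OF tk1[of k], of x] by linarith
  qed
  have b1: "\<And>s a. 0 \<le> bonus1 \<phi> Sset (\<theta>hat (tk k)) (\<Sigma> (tk k)) (\<beta> (tk k)) s a"
  proof -
    fix s a
    have "\<And>s'. 0 \<le> mnl_prob \<phi> Sset (\<theta>hat (tk k)) s a s'"
      unfolding mnl_prob_def using pos[of s a] by simp
    then show "0 \<le> bonus1 \<phi> Sset (\<theta>hat (tk k)) (\<Sigma> (tk k)) (\<beta> (tk k)) s a"
      unfolding bonus1_def wnorm_def using beta_pos[of "tk k"] inv_psd
      by (intro mult_nonneg_nonneg sum_nonneg) auto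
  qed
  have b2: "\<And>s a. 0 \<le> bonus2 \<phi> Sset (\<Sigma> (tk k)) (\<beta> (tk k)) s a"
  proof -
    fix s a
    have "Max ((\<lambda>s'. (wnorm (matrix_inv (\<Sigma> (tk k))) (\<phi> s a s'))\<^sup>2) ` Sset s a)
          \<in> (\<lambda>s'. (wnorm (matrix_inv (\<Sigma> (tk k))) (\<phi> s a s'))\<^sup>2) ` Sset s a"
      using Sset_ne by (intro Max_in) auto
    then have "0 \<le> Max ((\<lambda>s'. (wnorm (matrix_inv (\<Sigma> (tk k))) (\<phi> s a s'))\<^sup>2) ` Sset s a)" by auto
    then show "0 \<le> bonus2 \<phi> Sset (\<Sigma> (tk k)) (\<beta> (tk k)) s a"
      unfolding bonus2_def by simp
  qed
  have "p0 \<in> ?P"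
    unfolding conf_set_def
  proof (intro CollectI conjI allI)
    fix s a
    have "(\<Sum>s'\<in>Sset s a. \<bar>p0 s a s' - mnl_prob \<phi> Sset (\<theta>hat (tk k)) s a s'\<bar>) = 0"
      by (rule sum.neutral) (simp add: p0_def)
    then show "(\<Sum>s'\<in>Sset s a. \<bar>p0 s a s' - mnl_prob \<phi> Sset (\<theta>hat (tk k)) s a s'\<bar>)
       \<le> bonus1 \<phi> Sset (\<theta>hat (tk k)) (\<Sigma> (tk k)) (\<beta> (tk k)) s a + bonus2 \<phi> Sset (\<Sigma> (tk k)) (\<beta> (tk k)) s a"
      using b1[of s a] b2[of s a] by simp
  qed (use rng0 sm0 in auto)
  then have ne: "?P \<noteq> {}" by auto
  have rng: "\<And>p s a s'. p \<in> ?P \<Longrightarrow> 0 \<le> p s a s' \<and> p s a s' \<le> 1"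
    unfolding conf_set_def by auto
  have sm: "\<And>p s a. p \<in> ?P \<Longrightarrow> (\<Sum>s'\<in>Sset s a. p s a s') = 1"
    unfolding conf_set_def by auto
  have "\<bar>devi_Q \<gamma> ?P Sset r (Suc N) (sta t) (act t) - devi_Q \<gamma> ?P Sset r N (sta t) (act t)\<bar> \<le> \<gamma> ^ N"
    by (rule devi_contract; (rule ne | erule rng | erule sm | rule r_range | rule gamma))
  then show ?thesis by simp
qed

end
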